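(* Let $\mathbf A$ be a residuated semigroup satisfying $1_xy=y1_x$ for all $x,y$, where $1_x:=x/x$. Consider the conditions (each required for all $x,y\in A$): (H1) if $1_x=1_y$ then $1_{xy}=1_x$; (H2) if $1_x=1_y$ then $1_{x/y}=1_x$; (H3) if $1_x=1_y$ then $1_{x\backslash y}=1_x$. Then each of (H2) and (H3) implies that $x\backslash x=x/x$ for all $x\in A$; moreover (H2) and (H3) are equivalent, and (H2) implies (H1).
   Context: A residuated semigroup is a structure $\langle A,\le,\cdot,\backslash,/\rangle$ where $\langle A,\le\rangle$ is a poset, $\langle A,\cdot\rangle$ is a semigroup (we write $xy$ for $x\cdot y$), and for all $x,y,z$: $xy\le z\iff x\le z/y\iff y\le x\backslash z$. *)

theory Defs
  imports Main
begin

text \<open>A residuated semigroup on the whole type 'a, with order le, product mult,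
  left division ldiv (x\y = ldiv x y) and right division rdiv (x/y = rdiv x y).\<close>

definition residuated_semigroup ::
  "('a \<Rightarrow> 'a \<Rightarrow> bool) \<Rightarrow> ('a \<Rightarrow> 'a \<Rightarrow> 'a) \<Rightarrow> ('a \<Rightarrow> 'a \<Rightarrow> 'a) \<Rightarrow> ('a \<Rightarrow> 'a \<Rightarrow> 'a) \<Rightarrow> bool"
where
  "residuated_semigroup le mult ldiv rdiv \<longleftrightarrow>
     (\<forall>x. le x x) \<and>
     (\<forall>x y. le x y \<and> le y x \<longrightarrow> x = y) \<and>
     (\<forall>x y z. le x y \<and> le y z \<longrightarrow> le x z) \<and>
     (\<forall>x y z. mult (mult x y) z = mult x (mult y z)) \<and>
     (\<forall>x y z. (le (mult x y) z \<longleftrightarrow> le x (rdiv z y)) \<and>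
              (le (mult x y) z \<longleftrightarrow> le y (ldiv x z)))"

definition unit_of :: "('a \<Rightarrow> 'a \<Rightarrow> 'a) \<Rightarrow> 'a \<Rightarrow> 'a" where
  "unit_of rdiv x = rdiv x x"

definition H1 :: "('a \<Rightarrow> 'a \<Rightarrow> 'a) \<Rightarrow> ('a \<Rightarrow> 'a \<Rightarrow> 'a) \<Rightarrow> ('a \<Rightarrow> 'a \<Rightarrow> 'a) \<Rightarrow> bool" where
  "H1 mult ldiv rdiv \<longleftrightarrow> (\<forall>x y. unit_of rdiv x = unit_of rdiv y \<longrightarrow>
      unit_of rdiv (mult x y) = unit_of rdiv x)"

definition H2 :: "('a \<Rightarrow> 'a \<Rightarrow> 'a) \<Rightarrow> ('a \<Rightarrow> 'a \<Rightarrow> 'a) \<Rightarrow> ('a \<Rightarrow> 'a \<Rightarrow> 'a) \<Rightarrow> bool" where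
  "H2 mult ldiv rdiv \<longleftrightarrow> (\<forall>x y. unit_of rdiv x = unit_of rdiv y \<longrightarrow>
      unit_of rdiv (rdiv x y) = unit_of rdiv x)"

definition H3 :: "('a \<Rightarrow> 'a \<Rightarrow> 'a) \<Rightarrow> ('a \<Rightarrow> 'a \<Rightarrow> 'a) \<Rightarrow> ('a \<Rightarrow> 'a \<Rightarrow> 'a) \<Rightarrow> bool" where
  "H3 mult ldiv rdiv \<longleftrightarrow> (\<forall>x y. unit_of rdiv x = unit_of rdiv y \<longrightarrow>
      unit_of rdiv (ldiv x y) = unit_of rdiv x)"

end

theory Submission
  imports Defs
begin

lemma E2g:
  fixes le :: "'a \<Rightarrow> 'a \<Rightarrow> bool" and m ld rd :: "'a \<Rightarrow> 'a \<Rightarrow> 'a"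
  assumes refl: "\<And>x. le x x" and anti: "\<And>x y. le x y \<Longrightarrow> le y x \<Longrightarrow> x = y"
  and trans: "\<And>x y z. le x y \<Longrightarrow> le y z \<Longrightarrow> le x z"
  and assoc: "\<And>x y z. m (m x y) z = m x (m y z)"
  and r1: "\<And>x y z. le (m x y) z \<longleftrightarrow> le x (rd z y)"
  and r2: "\<And>x y z. le (m x y) z \<longleftrightarrow> le y (ld x z)"
  and c: "\<And>x y. m (rd x x) y = m y (rd x x)"
  and h2: "\<And>x y. rd x x = rd y y \<Longrightarrow> rd (rd x y) (rd x y) = rd x x"
  shows "ld x x = rd x x"
proof -
  have f1: "\<forall>a aa. le (m a (ld a aa)) aa"
    by (simp add: local.refl r2)
  have f2: "\<forall>a aa. le (m (rd aa a) a) aa"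
    by (simp add: local.refl r1)
  then have f3: "\<forall>a aa ab. le a (ld (rd aa ab) aa) \<or> \<not> le a ab"
    using local.trans r2 by blast
  have f4: "\<forall>a. le (rd a a) (ld a a)"
    using f2 by (metis c r2)
  have f5: "\<forall>a aa ab. le (m (rd a aa) (rd aa ab)) (rd a ab)"
    using f3 f2 by (metis assoc r1 r2)
  have f6: "\<forall>a aa ab. le (ld a aa) (ld a (rd ab (ld aa ab)))"
    using f1 by (meson local.trans r1 r2)
  have f7: "\<forall>a aa ab ac. le a (rd (ld aa ab) ac) \<or> \<not> le a (ld aa (rd ab ac))"
    by (smt (verit) assoc r1 r2)
  have f8: "\<forall>a. rd a (rd a (ld a a)) = rd a a"
    using f4 f3 f1 by (smt (verit) anti c r1 r2)
  have "\<forall>a aa. le (rd a a) (ld a (rd aa (ld a aa)))"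
    using f6 f4 local.trans by blast
  then have "\<forall>a. rd (ld a a) (ld a a) = rd a a"
    using f8 f7 f5 by (metis (no_types) anti c h2 r1)
  then show ?thesis
    using f7 f6 f4 by (metis anti)
qed


lemma E3g:
  fixes le :: "'a \<Rightarrow> 'a \<Rightarrow> bool" and m ld rd :: "'a \<Rightarrow> 'a \<Rightarrow> 'a"
  assumes refl: "\<And>x. le x x" and anti: "\<And>x y. le x y \<Longrightarrow> le y x \<Longrightarrow> x = y"
  and trans: "\<And>x y z. le x y \<Longrightarrow> le y z \<Longrightarrow> le x z"
  and assoc: "\<And>x y z. m (m x y) z = m x (m y z)"
  and r1: "\<And>x y z. le (m x y) z \<longleftrightarrow> le x (rd z y)"
  and r2: "\<And>x y z. le (m x y) z \<longleftrightarrow> le y (ld x z)"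
  and c: "\<And>x y. m (rd x x) y = m y (rd x x)"
  and h: "\<And>x y. rd x x = rd y y \<Longrightarrow> rd (ld x y) (ld x y) = rd x x"
  shows "ld x x = rd x x"
proof -
  have hv: "rd (ld x x) (ld x x) = rd x x" using h by blast
  have k1: "le (m (rd x x) x) x" using r1 refl by blast
  have k2: "le (m x (ld x x)) x" using r2 refl by blast
  have a: "le (rd x x) (ld x x)" using k1 c r2 by metis
  have "le (m x (m (ld x x) (ld x x))) x"
  proof -
    have "le (m (m x (ld x x)) (ld x x)) (m x (ld x x))" using k2 r1 refl trans by meson
    then show ?thesis using assoc k2 trans by metis
  qed
  then have "le (m (ld x x) (ld x x)) (ld x x)" using r2 by blast
  then have "le (ld x x) (rd (ld x x) (ld x x))" using r1 by blast
  then have "le (ld x x) (rd x x)" using hv by simp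
  then show ?thesis using a anti by blast
qed

locale rs =
  fixes le :: "'a \<Rightarrow> 'a \<Rightarrow> bool" and m ld rd :: "'a \<Rightarrow> 'a \<Rightarrow> 'a"
  assumes refl: "\<And>x. le x x" and anti: "\<And>x y. le x y \<Longrightarrow> le y x \<Longrightarrow> x = y"
  and trans: "\<And>x y z. le x y \<Longrightarrow> le y z \<Longrightarrow> le x z"
  and assoc: "\<And>x y z. m (m x y) z = m x (m y z)"
  and r1: "\<And>x y z. le (m x y) z \<longleftrightarrow> le x (rd z y)"
  and r2: "\<And>x y z. le (m x y) z \<longleftrightarrow> le y (ld x z)"
  and c: "\<And>x y. m (rd x x) y = m y (rd x x)"
begin

lemma k1: "le (m (rd z y) y) z" using r1 refl by blast
lemma k2: "le (m y (ld y z)) z" using r2 refl by blast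
lemma m1: "le a b \<Longrightarrow> le (m a c) (m b c)"
proof -
  assume "le a b"
  moreover have "le b (rd (m b c) c)" using r1 refl by blast
  ultimately have "le a (rd (m b c) c)" using trans by blast
  then show ?thesis using r1 by blast
qed
lemma m2: "le a b \<Longrightarrow> le (m c a) (m c b)"
proof -
  assume "le a b"
  moreover have "le b (ld c (m c b))" using r2 refl by blast
  ultimately have "le a (ld c (m c b))" using trans by blast
  then show ?thesis using r2 by blast
qed

lemma yoneda: "(\<And>t. le t p \<longleftrightarrow> le t q) \<Longrightarrow> p = q" using refl anti by blast

lemma i1: "rd c (m a b) = rd (rd c b) a"
proof (rule yoneda)
  fix t
  show "le t (rd c (m a b)) \<longleftrightarrow> le t (rd (rd c b) a)"
    using r1[of t "m a b" c] r1[of "m t a" b c] r1[of t a "rd c b"] assoc[of t a b] by simp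
qed

lemma i3: "rd (ld a b) c = ld a (rd b c)"
proof (rule yoneda)
  fix t
  show "le t (rd (ld a b) c) \<longleftrightarrow> le t (ld a (rd b c))"
    using r1[of t c "ld a b"] r2[of a "m t c" b] r2[of a t "rd b c"] r1[of "m a t" c b]
      assoc[of a t c] by simp
qed

lemma unitle: "le u (rd b b) \<longleftrightarrow> le (m u b) b" using r1 by blast

lemma f1: "le (rd a a) (rd (rd a b) (rd a b))"
proof -
  have "le (m (rd a a) (m (rd a b) b)) (m (rd a a) a)" using k1 m2 by blast
  then have "le (m (rd a a) (m (rd a b) b)) a" using k1 trans by blast
  then have "le (m (m (rd a a) (rd a b)) b) a" using assoc by simp
  then have "le (m (rd a a) (rd a b)) (rd a b)" using r1 by blast
  then show ?thesis using unitle by blast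
qed

lemma f2: "le (rd b b) (rd (rd a b) (rd a b))"
proof -
  have "le (m (rd a b) (m (rd b b) b)) (m (rd a b) b)" using k1 m2 by blast
  then have "le (m (rd a b) (m (rd b b) b)) a" using k1 trans by blast
  then have "le (m (m (rd a b) (rd b b)) b) a" using assoc by simp
  then have "le (m (rd a b) (rd b b)) (rd a b)" using r1 by blast
  then have "le (m (rd b b) (rd a b)) (rd a b)" using c by simp
  then show ?thesis using unitle by blast
qed

lemma f3: "le (rd a a) (rd (ld a b) (ld a b))"
proof -
  have "le (m (m (rd a a) a) (ld a b)) (m a (ld a b))" using k1 m1 by blast
  then have "le (m (m (rd a a) a) (ld a b)) b" using k2 trans by blast
  then have "le (m (m a (rd a a)) (ld a b)) b" using c by simp
  then have "le (m a (m (rd a a) (ld a b))) b" using assoc by simp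
  then have "le (m (rd a a) (ld a b)) (ld a b)" using r2 by blast
  then show ?thesis using unitle by blast
qed

lemma f5: "le (rd a a) (rd (m a b) (m a b))"
proof -
  have "le (m (m (rd a a) a) b) (m a b)" using k1 m1 by blast
  then have "le (m (rd a a) (m a b)) (m a b)" using assoc by simp
  then show ?thesis using unitle by blast
qed

lemma E2:
  assumes h2: "\<And>x y. rd x x = rd y y \<Longrightarrow> rd (rd x y) (rd x y) = rd x x"
  shows "ld x x = rd x x"
  by (rule E2g[where le=le and m=m and ld=ld and rd=rd, OF refl anti trans assoc r1 r2 c h2])

lemma E3:
  assumes h: "\<And>x y. rd x x = rd y y \<Longrightarrow> rd (ld x y) (ld x y) = rd x x"
  shows "ld x x = rd x x"
  by (rule E3g[where le=le and m=m and ld=ld and rd=rd, OF refl anti trans assoc r1 r2 c h])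

lemma H21:
  assumes h: "\<And>x y. rd x x = rd y y \<Longrightarrow> rd (rd x y) (rd x y) = rd x x"
    and u: "rd x x = rd y y"
  shows "rd (m x y) (m x y) = rd x x"
proof -
  have a: "rd (rd x y) (rd x y) = rd x x" using h u by blast
  have b: "rd (rd (rd x y) x) (rd (rd x y) x) = rd x x" using h[of "rd x y" x] a by simp
  have "le (rd (m x y) (m x y)) (rd (rd x (m x y)) (rd x (m x y)))" by (rule f2)
  then have "le (rd (m x y) (m x y)) (rd x x)" using b i1 by simp
  then show ?thesis using f5 anti by blast
qed

lemma H23:
  assumes h: "\<And>x y. rd x x = rd y y \<Longrightarrow> rd (rd x y) (rd x y) = rd x x"
    and u: "rd x x = rd y y"
  shows "rd (ld x y) (ld x y) = rd x x"
proof -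
  have e: "\<And>x. ld x x = rd x x" using E2 h by blast
  have "le (rd (ld x y) (ld x y)) (rd x x)" by (metis e f1 h i3 u)
  then show ?thesis using f3 anti by blast
qed

lemma H32:
  assumes h: "\<And>x y. rd x x = rd y y \<Longrightarrow> rd (ld x y) (ld x y) = rd x x"
    and u: "rd x x = rd y y"
  shows "rd (rd x y) (rd x y) = rd x x"
proof -
  have e: "\<And>x. ld x x = rd x x" using E3 h by blast
  interpret op: rs le "\<lambda>a b. m b a" "\<lambda>x z. rd z x" "\<lambda>z y. ld y z"
  proof
    show "\<And>x. le x x" by (rule refl)
    show "\<And>x y. le x y \<Longrightarrow> le y x \<Longrightarrow> x = y" by (rule anti)
    show "\<And>x y z. le x y \<Longrightarrow> le y z \<Longrightarrow> le x z" by (rule trans)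
    show "\<And>x y z. m z (m y x) = m (m z y) x" by (simp add: assoc)
    show "\<And>x y z. le (m y x) z = le x (ld y z)" by (rule r2)
    show "\<And>x y z. le (m y x) z = le y (rd z x)" by (rule r1)
    show "\<And>x y. m y (ld x x) = m (ld x x) y" by (simp add: e c)
  qed
  have h': "\<And>x y. ld x x = ld y y \<Longrightarrow> ld (ld y x) (ld y x) = ld x x"
    using h e by metis
  have "ld (rd x y) (rd x y) = ld y y"
    using op.H23[of y x, OF h'] u e by metis
  then show ?thesis using e u by metis
qed
end

theorem proposition3p4:
  fixes le :: "'a \<Rightarrow> 'a \<Rightarrow> bool" and mult ldiv rdiv :: "'a \<Rightarrow> 'a \<Rightarrow> 'a"
  assumes "residuated_semigroup le mult ldiv rdiv"
    and "\<forall>x y. mult (unit_of rdiv x) y = mult y (unit_of rdiv x)"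
  shows "(H2 mult ldiv rdiv \<longrightarrow> (\<forall>x. ldiv x x = rdiv x x))
       \<and> (H3 mult ldiv rdiv \<longrightarrow> (\<forall>x. ldiv x x = rdiv x x))
       \<and> (H2 mult ldiv rdiv \<longleftrightarrow> H3 mult ldiv rdiv)
       \<and> (H2 mult ldiv rdiv \<longrightarrow> H1 mult ldiv rdiv)"
proof -
  interpret rs le mult ldiv rdiv
    using assms unfolding residuated_semigroup_def unit_of_def
    by unfold_locales blast+
  show ?thesis
    unfolding H1_def H2_def H3_def unit_of_def
    using E2 E3 H21 H23 H32 by blast
qed

end
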